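(* Let $r\ge5$ and let $W_{r+1}=C_r\vee K_1$ be the wheel. Then $\operatorname{ZIR}(W_{r+1})=r-\gamma(C_r)=r-\lceil r/3\rceil$ and $\operatorname{zir}(W_{r+1})=\operatorname{Z}(W_{r+1})=\overline{\operatorname{Z}}(W_{r+1})=3$.
   Context: $\vee$ is the join; $\gamma$ is the domination number. Zero forcing: a blue vertex $u$ changes a white vertex $w$ to blue if $w$ is the only white neighbor of $u$; $B$ is a zero forcing set if from blue set $B$ eventually all vertices are blue; $\operatorname{Z}(G)$ is the minimum size of a zero forcing set and $\overline{\operatorname{Z}}(G)$ the maximum size of an inclusion-minimal zero forcing set. A nonempty $F\subseteq V(G)$ is a fort if every $v\notin F$ has $|N(v)\cap F|\ne1$. A private fort of $x\in S$ relative to $S$ is a fort $F$ with $S\cap F=\{x\}$; $S$ is a ZIr-set if every element of $S$ has a private fort. $\operatorname{zir}(G)$ / $\operatorname{ZIR}(G)$ are the minimum / maximum cardinality of an inclusion-maximal ZIr-set. *)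

theory Defs imports Complex_Main begin

text \<open>Finite simple graphs are given by a vertex set V and an adjacency predicate E
(assumed symmetric and irreflexive on V for the graphs used below).\<close>

definition nbhd :: "'a set \<Rightarrow> ('a \<Rightarrow> 'a \<Rightarrow> bool) \<Rightarrow> 'a \<Rightarrow> 'a set" where
  "nbhd V E v = {u \<in> V. E v u}"

definition zf_step :: "'a set \<Rightarrow> ('a \<Rightarrow> 'a \<Rightarrow> bool) \<Rightarrow> 'a set \<Rightarrow> 'a set" where
  "zf_step V E S = S \<union> {w. \<exists>u\<in>S. nbhd V E u - S = {w}}"

definition zf_closure :: "'a set \<Rightarrow> ('a \<Rightarrow> 'a \<Rightarrow> bool) \<Rightarrow> 'a set \<Rightarrow> 'a set" where
  "zf_closure V E B = (\<Union>n. (zf_step V E ^^ n) B)"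

definition zero_forcing_set :: "'a set \<Rightarrow> ('a \<Rightarrow> 'a \<Rightarrow> bool) \<Rightarrow> 'a set \<Rightarrow> bool" where
  "zero_forcing_set V E B \<longleftrightarrow> B \<subseteq> V \<and> zf_closure V E B = V"

definition minimal_zero_forcing_set :: "'a set \<Rightarrow> ('a \<Rightarrow> 'a \<Rightarrow> bool) \<Rightarrow> 'a set \<Rightarrow> bool" where
  "minimal_zero_forcing_set V E B \<longleftrightarrow> zero_forcing_set V E B \<and>
     (\<forall>B'. B' \<subset> B \<longrightarrow> \<not> zero_forcing_set V E B')"

definition Z :: "'a set \<Rightarrow> ('a \<Rightarrow> 'a \<Rightarrow> bool) \<Rightarrow> nat" where
  "Z V E = Min (card ` {B. zero_forcing_set V E B})"

definition Zbar :: "'a set \<Rightarrow> ('a \<Rightarrow> 'a \<Rightarrow> bool) \<Rightarrow> nat" where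
  "Zbar V E = Max (card ` {B. minimal_zero_forcing_set V E B})"

definition fort :: "'a set \<Rightarrow> ('a \<Rightarrow> 'a \<Rightarrow> bool) \<Rightarrow> 'a set \<Rightarrow> bool" where
  "fort V E F \<longleftrightarrow> F \<noteq> {} \<and> F \<subseteq> V \<and> (\<forall>v\<in>V - F. card (nbhd V E v \<inter> F) \<noteq> 1)"

definition private_fort :: "'a set \<Rightarrow> ('a \<Rightarrow> 'a \<Rightarrow> bool) \<Rightarrow> 'a set \<Rightarrow> 'a \<Rightarrow> 'a set \<Rightarrow> bool" where
  "private_fort V E S x F \<longleftrightarrow> fort V E F \<and> S \<inter> F = {x}"

definition ZIr_set :: "'a set \<Rightarrow> ('a \<Rightarrow> 'a \<Rightarrow> bool) \<Rightarrow> 'a set \<Rightarrow> bool" where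
  "ZIr_set V E S \<longleftrightarrow> S \<subseteq> V \<and> (\<forall>x\<in>S. \<exists>F. private_fort V E S x F)"

definition maximal_ZIr_set :: "'a set \<Rightarrow> ('a \<Rightarrow> 'a \<Rightarrow> bool) \<Rightarrow> 'a set \<Rightarrow> bool" where
  "maximal_ZIr_set V E S \<longleftrightarrow> ZIr_set V E S \<and> (\<forall>T. S \<subset> T \<longrightarrow> \<not> ZIr_set V E T)"

definition zir :: "'a set \<Rightarrow> ('a \<Rightarrow> 'a \<Rightarrow> bool) \<Rightarrow> nat" where
  "zir V E = Min (card ` {S. maximal_ZIr_set V E S})"

definition ZIR :: "'a set \<Rightarrow> ('a \<Rightarrow> 'a \<Rightarrow> bool) \<Rightarrow> nat" where
  "ZIR V E = Max (card ` {S. maximal_ZIr_set V E S})"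

definition dominating_set :: "'a set \<Rightarrow> ('a \<Rightarrow> 'a \<Rightarrow> bool) \<Rightarrow> 'a set \<Rightarrow> bool" where
  "dominating_set V E D \<longleftrightarrow> D \<subseteq> V \<and> (\<forall>v\<in>V. v \<in> D \<or> (\<exists>u\<in>D. E v u))"

definition domination_number :: "'a set \<Rightarrow> ('a \<Rightarrow> 'a \<Rightarrow> bool) \<Rightarrow> nat" where
  "domination_number V E = Min (card ` {D. dominating_set V E D})"

definition cycle_V :: "nat \<Rightarrow> nat set" where "cycle_V r = {0..<r}"
definition cycle_adj :: "nat \<Rightarrow> nat \<Rightarrow> nat \<Rightarrow> bool" where
  "cycle_adj r i j \<longleftrightarrow> i < r \<and> j < r \<and> i \<noteq> j \<and> (j = (i + 1) mod r \<or> i = (j + 1) mod r)"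

text \<open>The wheel W_{r+1} = C_r join K_1, the K_1 vertex being r.\<close>
definition wheel_V :: "nat \<Rightarrow> nat set" where "wheel_V r = {0..r}"
definition wheel_adj :: "nat \<Rightarrow> nat \<Rightarrow> nat \<Rightarrow> bool" where
  "wheel_adj r i j \<longleftrightarrow> cycle_adj r i j \<or> (i < r \<and> j = r) \<or> (i = r \<and> j < r)"

end

theory Submission imports Defs begin

section \<open>General zero forcing / fort facts\<close>

lemma fort_hit:
  assumes zf: "zero_forcing_set V E B" and F: "fort V E F"
  shows "B \<inter> F \<noteq> {}"
proof
  assume BF: "B \<inter> F = {}"
  have "(zf_step V E ^^ n) B \<inter> F = {} \<and> (zf_step V E ^^ n) B \<subseteq> V" for n
  proof (induction n)
    case 0 thus ?case using BF zf by (simp add: zero_forcing_set_def)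
  next
    case (Suc n)
    let ?S = "(zf_step V E ^^ n) B"
    have sub: "zf_step V E ?S \<subseteq> V"
    proof
      fix x assume "x \<in> zf_step V E ?S"
      then consider "x \<in> ?S" | u where "nbhd V E u - ?S = {x}" by (auto simp: zf_step_def)
      then show "x \<in> V"
      proof cases
        case 1 thus ?thesis using Suc.IH by blast
      next
        case 2 hence "x \<in> nbhd V E u" by blast
        thus ?thesis by (simp add: nbhd_def)
      qed
    qed
    have "zf_step V E ?S \<inter> F = {}"
    proof (rule ccontr)
      assume "zf_step V E ?S \<inter> F \<noteq> {}"
      then obtain w where w: "w \<in> zf_step V E ?S" "w \<in> F" by blast
      with Suc.IH have "w \<notin> ?S" by blast
      then obtain u where u: "u \<in> ?S" "nbhd V E u - ?S = {w}" using w(1) by (auto simp: zf_step_def)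
      have "nbhd V E u \<inter> F = {w}" using u(2) w(2) Suc.IH by blast
      moreover have "u \<in> V - F" using u(1) Suc.IH by blast
      moreover have "card (nbhd V E u \<inter> F) \<noteq> 1" using F \<open>u \<in> V - F\<close> unfolding fort_def by blast
      ultimately show False by simp
    qed
    then show ?case using sub by simp
  qed
  hence "zf_closure V E B \<inter> F = {}" by (auto simp: zf_closure_def)
  moreover have "zf_closure V E B = V" using zf by (simp add: zero_forcing_set_def)
  ultimately show False using F by (auto simp: fort_def)
qed

lemma step_mono: "S \<subseteq> zf_step V E S" by (simp add: zf_step_def)

lemma funpow_step_mono: "m \<le> n \<Longrightarrow> (zf_step V E ^^ m) B \<subseteq> (zf_step V E ^^ n) B"
proof (induction n)
  case 0 then show ?case by simp
next
  case (Suc n) then show ?case using step_mono[of "(zf_step V E ^^ n) B" V E]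
    by (auto simp: le_Suc_eq)
qed

lemma finite_in_stage:
  "finite A \<Longrightarrow> A \<subseteq> (\<Union>n. f n) \<Longrightarrow> (\<And>m n. m \<le> n \<Longrightarrow> f m \<subseteq> f (n::nat)) \<Longrightarrow> \<exists>N. A \<subseteq> f N"
proof (induction A rule: finite_induct)
  case empty thus ?case by auto
next
  case (insert x A)
  then obtain N where N: "A \<subseteq> f N" by auto
  from insert.prems obtain M where "x \<in> f M" by auto
  have "A \<subseteq> f (max N M)" using N insert.prems(2)[of N "max N M"] by auto
  moreover have "x \<in> f (max N M)" using \<open>x \<in> f M\<close> insert.prems(2)[of M "max N M"] by auto
  ultimately show ?case by blast
qed

lemma closure_closed:
  assumes fin: "finite V" and u: "u \<in> zf_closure V E B" and w: "nbhd V E u - zf_closure V E B = {w}"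
  shows "w \<in> zf_closure V E B"
proof -
  let ?f = "\<lambda>n. (zf_step V E ^^ n) B"
  have cl: "zf_closure V E B = (\<Union>n. ?f n)" by (simp add: zf_closure_def)
  have mono: "\<And>m n. m \<le> n \<Longrightarrow> ?f m \<subseteq> ?f n" by (rule funpow_step_mono)
  have fn: "finite (nbhd V E u - {w})" using fin by (simp add: nbhd_def)
  have sub: "nbhd V E u - {w} \<subseteq> (\<Union>n. ?f n)" using w unfolding cl by blast
  obtain N where N: "nbhd V E u - {w} \<subseteq> ?f N" using finite_in_stage[OF fn sub mono] by blast
  obtain M where M: "u \<in> ?f M" using u unfolding cl by blast
  define K where "K = max N M"
  have NK: "?f N \<subseteq> ?f K" using mono[of N K] by (simp add: K_def)
  have MK: "?f M \<subseteq> ?f K" using mono[of M K] by (simp add: K_def)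
  have uK: "u \<in> ?f K" using M MK by blast
  have fK: "?f K \<subseteq> zf_closure V E B" unfolding cl by blast
  have wn: "w \<in> nbhd V E u" "w \<notin> zf_closure V E B" using w by blast+
  have "nbhd V E u - ?f K = {w}" using N NK fK wn by blast
  hence "w \<in> zf_step V E (?f K)" using uK unfolding zf_step_def by blast
  hence "w \<in> ?f (Suc K)" by simp
  thus ?thesis unfolding cl by blast
qed

lemma step_sub: "S \<subseteq> V \<Longrightarrow> zf_step V E S \<subseteq> V"
proof
  fix x assume S: "S \<subseteq> V" and "x \<in> zf_step V E S"
  then consider "x \<in> S" | u where "nbhd V E u - S = {x}" by (auto simp: zf_step_def)
  then show "x \<in> V"
  proof cases
    case 1 thus ?thesis using S by blast
  next
    case 2 hence "x \<in> nbhd V E u" by blast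
    thus ?thesis by (simp add: nbhd_def)
  qed
qed

lemma zf_if_hits:
  assumes fin: "finite V" and BV: "B \<subseteq> V" and hit: "\<And>F. fort V E F \<Longrightarrow> B \<inter> F \<noteq> {}"
  shows "zero_forcing_set V E B"
proof -
  let ?Cl = "zf_closure V E B"
  have "(zf_step V E ^^ n) B \<subseteq> V" for n
  proof (induction n)
    case 0 show ?case using BV by simp
  next
    case (Suc n) thus ?case using step_sub[of "(zf_step V E ^^ n) B" V E] by simp
  qed
  hence ClV: "?Cl \<subseteq> V" by (auto simp: zf_closure_def)
  have BCl: "B \<subseteq> ?Cl" using UN_upper[of 0 UNIV "\<lambda>n. (zf_step V E ^^ n) B"]
    by (simp add: zf_closure_def)
  show ?thesis
  proof (rule ccontr)
    assume "\<not> ?thesis"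
    hence ne: "V - ?Cl \<noteq> {}" using ClV BV by (auto simp: zero_forcing_set_def)
    have "fort V E (V - ?Cl)"
      unfolding fort_def
    proof (intro conjI ballI)
      show "V - ?Cl \<noteq> {}" by fact
      show "V - ?Cl \<subseteq> V" by auto
      fix v assume v: "v \<in> V - (V - ?Cl)"
      show "card (nbhd V E v \<inter> (V - ?Cl)) \<noteq> 1"
      proof
        assume "card (nbhd V E v \<inter> (V - ?Cl)) = 1"
        then obtain w where w: "nbhd V E v \<inter> (V - ?Cl) = {w}" by (auto simp: card_1_singleton_iff)
        have "nbhd V E v \<subseteq> V" by (auto simp: nbhd_def)
        hence "nbhd V E v - ?Cl = {w}" using w by blast
        then have "w \<in> ?Cl" using closure_closed[OF fin] v by blast
        with w show False by blast
      qed
    qed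
    with hit BCl show False by blast
  qed
qed

definition sc :: "nat \<Rightarrow> nat \<Rightarrow> nat" where "sc r v = (if Suc v = r then 0 else Suc v)"
definition pc :: "nat \<Rightarrow> nat \<Rightarrow> nat" where "pc r v = (if v = 0 then r - 1 else v - 1)"

lemma sc_lt: "v < r \<Longrightarrow> sc r v < r" by (auto simp: sc_def)
lemma pc_lt: "v < r \<Longrightarrow> pc r v < r" by (auto simp: pc_def)
lemma sc_ne: "v < r \<Longrightarrow> 2 \<le> r \<Longrightarrow> sc r v \<noteq> v" by (auto simp: sc_def)
lemma pc_ne: "v < r \<Longrightarrow> 2 \<le> r \<Longrightarrow> pc r v \<noteq> v" by (auto simp: pc_def)
lemma sc_pc_ne: "v < r \<Longrightarrow> 3 \<le> r \<Longrightarrow> sc r v \<noteq> pc r v" by (auto simp: sc_def pc_def)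
lemma pc_sc: "v < r \<Longrightarrow> pc r (sc r v) = v" by (auto simp: sc_def pc_def)
lemma sc_pc: "v < r \<Longrightarrow> sc r (pc r v) = v" by (auto simp: sc_def pc_def)
lemma sc_mod: "v < r \<Longrightarrow> sc r v = (v + 1) mod r"
  by (cases "Suc v = r") (auto simp: sc_def)
lemma sc_eq_iff: "i < r \<Longrightarrow> j < r \<Longrightarrow> (sc r j = i) = (j = pc r i)"
  by (auto simp: sc_def pc_def)

lemma cycle_adj_iff: "3 \<le> r \<Longrightarrow> cycle_adj r i j \<longleftrightarrow> i < r \<and> (j = sc r i \<or> j = pc r i)"
proof -
  assume r: "3 \<le> r"
  show ?thesis
  proof
    assume a: "cycle_adj r i j"
    hence ij: "i < r" "j < r" unfolding cycle_adj_def by auto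
    from a consider "j = (i + 1) mod r" | "i = (j + 1) mod r" unfolding cycle_adj_def by auto
    then show "i < r \<and> (j = sc r i \<or> j = pc r i)"
    proof cases
      case 1 thus ?thesis using ij sc_mod[of i r] by auto
    next
      case 2 thus ?thesis using ij sc_mod[of j r] sc_eq_iff[of i r j] by auto
    qed
  next
    assume a: "i < r \<and> (j = sc r i \<or> j = pc r i)"
    hence i: "i < r" by auto
    from a show "cycle_adj r i j"
    proof (elim conjE disjE)
      assume "j = sc r i" thus ?thesis using i r sc_lt[OF i] sc_ne[OF i] sc_mod[OF i]
        unfolding cycle_adj_def by auto
    next
      assume j: "j = pc r i"
      have "sc r j = i" using j sc_pc[OF i] by simp
      thus ?thesis using j i r pc_lt[OF i] pc_ne[OF i] sc_mod[of j r]
        unfolding cycle_adj_def by auto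
    qed
  qed
qed

lemma nbhd_hub: "nbhd (wheel_V r) (wheel_adj r) r = {0..<r}"
  by (auto simp: nbhd_def wheel_V_def wheel_adj_def cycle_adj_def)

lemma nbhd_cyc: "3 \<le> r \<Longrightarrow> v < r \<Longrightarrow> nbhd (wheel_V r) (wheel_adj r) v = {sc r v, pc r v, r}"
  using sc_lt[of v r] pc_lt[of v r]
  by (auto simp: nbhd_def wheel_V_def wheel_adj_def cycle_adj_iff)

section \<open>Wheel forts\<close>

lemma card_ne1: "finite A \<Longrightarrow> x \<in> A \<Longrightarrow> y \<in> A \<Longrightarrow> x \<noteq> y \<Longrightarrow> card A \<noteq> 1"
  by (auto simp: card_1_singleton_iff)

lemma lt_of_V: "x \<in> wheel_V r \<Longrightarrow> x \<noteq> r \<Longrightarrow> x < r" by (simp add: wheel_V_def)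

lemma sub_cyc: "S \<subseteq> wheel_V r \<Longrightarrow> S - {r} \<subseteq> {0..<r}"
proof
  fix x assume "S \<subseteq> wheel_V r" "x \<in> S - {r}"
  thus "x \<in> {0..<r}" using lt_of_V[of x r] by auto
qed

lemma sub_cyc': "S \<subseteq> wheel_V r \<Longrightarrow> r \<notin> S \<Longrightarrow> S \<subseteq> {0..<r}"
  using sub_cyc[of S r] by auto

lemma wfin: "finite (wheel_V r)" by (simp add: wheel_V_def)
lemma nbhd_fin: "finite (nbhd (wheel_V r) (wheel_adj r) v)" by (simp add: nbhd_def wheel_V_def)
lemma card3: "card {x, y, z} \<le> 3" by (auto simp: card_insert_if)

lemma two_elems: assumes "2 \<le> card A" shows "\<exists>x y. x \<in> A \<and> y \<in> A \<and> x \<noteq> y"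
proof (rule ccontr)
  assume "\<not> ?thesis"
  hence "\<forall>x\<in>A. \<forall>y\<in>A. x = y" by blast
  moreover have "finite A" using assms card.infinite by fastforce
  ultimately have "card A \<le> Suc 0" using card_le_Suc0_iff_eq by blast
  thus False using assms by simp
qed

lemma card_ne1_nb:
  assumes "x \<in> nbhd (wheel_V r) (wheel_adj r) v \<inter> F" "y \<in> nbhd (wheel_V r) (wheel_adj r) v \<inter> F" "x \<noteq> y"
  shows "card (nbhd (wheel_V r) (wheel_adj r) v \<inter> F) \<noteq> 1"
proof -
  have "finite (nbhd (wheel_V r) (wheel_adj r) v \<inter> F)" using nbhd_fin[of r v] by simp
  thus ?thesis using card_ne1[OF _ assms] by simp
qed

lemma fort_minus1:
  assumes r: "5 \<le> r" and b: "b < r"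
  shows "fort (wheel_V r) (wheel_adj r) ({0..<r} - {b})"
  unfolding fort_def
proof (intro conjI ballI)
  have inF: "sc r b \<in> {0..<r} - {b}" "pc r b \<in> {0..<r} - {b}"
    using sc_lt[OF b] pc_lt[OF b] sc_ne[OF b] pc_ne[OF b] r by auto
  thus "{0..<r} - {b} \<noteq> {}" by blast
  show "{0..<r} - {b} \<subseteq> wheel_V r" by (auto simp: wheel_V_def)
  fix v assume v: "v \<in> wheel_V r - ({0..<r} - {b})"
  hence vv: "v = b \<or> v = r" by (auto simp: wheel_V_def)
  have r3: "3 \<le> r" using r by simp
  have nb: "sc r b \<in> nbhd (wheel_V r) (wheel_adj r) v \<and> pc r b \<in> nbhd (wheel_V r) (wheel_adj r) v"
  proof (cases "v = b")
    case True thus ?thesis using nbhd_cyc[OF r3 b] by simp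
  next
    case False hence "v = r" using vv by simp
    thus ?thesis using nbhd_hub[of r] sc_lt[OF b] pc_lt[OF b] by simp
  qed
  show "card (nbhd (wheel_V r) (wheel_adj r) v \<inter> ({0..<r} - {b})) \<noteq> 1"
    by (rule card_ne1_nb[where x="sc r b" and y="pc r b"]) (use nb inF sc_pc_ne[OF b r3] in auto)
qed

lemma fort_hub2:
  assumes r: "5 \<le> r" and a: "a < r" and b: "b < r"
  shows "fort (wheel_V r) (wheel_adj r) (insert r ({0..<r} - {a, b}))"
  unfolding fort_def
proof (intro conjI ballI)
  show "insert r ({0..<r} - {a, b}) \<noteq> {}" by auto
  show "insert r ({0..<r} - {a, b}) \<subseteq> wheel_V r" by (auto simp: wheel_V_def)
  fix v assume v: "v \<in> wheel_V r - insert r ({0..<r} - {a, b})"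
  hence vab: "v = a \<or> v = b" and vr: "v < r" by (auto simp: wheel_V_def)
  have r3: "3 \<le> r" using r by simp
  have "\<exists>c. c \<in> {sc r v, pc r v} \<and> c \<notin> {a, b}"
    using vab sc_ne[OF vr] pc_ne[OF vr] sc_pc_ne[OF vr r3] r by auto
  then obtain c where c: "c \<in> {sc r v, pc r v}" "c \<notin> {a, b}" by blast
  have cr: "c < r" using c sc_lt[OF vr] pc_lt[OF vr] by auto
  have "c \<in> nbhd (wheel_V r) (wheel_adj r) v \<inter> insert r ({0..<r} - {a, b})"
    using c cr nbhd_cyc[OF r3 vr] by auto
  moreover have "r \<in> nbhd (wheel_V r) (wheel_adj r) v \<inter> insert r ({0..<r} - {a, b})"
    using nbhd_cyc[OF r3 vr] by auto
  ultimately show "card (nbhd (wheel_V r) (wheel_adj r) v \<inter> insert r ({0..<r} - {a, b})) \<noteq> 1"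
    by (rule card_ne1_nb) (use cr in simp)
qed

lemma sc_iter: "a < r \<Longrightarrow> (sc r ^^ k) a = (a + k) mod r"
proof (induction k)
  case 0 thus ?case by simp
next
  case (Suc k)
  have "(a + k) mod r < r" using Suc.prems by simp
  then have "sc r ((a + k) mod r) = ((a + k) mod r + 1) mod r" by (rule sc_mod)
  also have "\<dots> = (a + Suc k) mod r" by (simp add: mod_Suc_eq)
  finally show ?case using Suc by simp
qed

lemma run:
  assumes r: "3 \<le> r" and F: "fort (wheel_V r) (wheel_adj r) F" and rF: "r \<notin> F" and a: "a < r"
    and aF: "a \<notin> F" and saF: "sc r a \<notin> F"
  shows False
proof -
  have it: "(sc r ^^ k) a \<notin> F \<and> (sc r ^^ Suc k) a \<notin> F" for k
  proof (induction k)
    case 0 thus ?case using aF saF by simp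
  next
    case (Suc k)
    define x where "x = (sc r ^^ k) a"
    have xr: "x < r" using sc_iter[OF a, of k] a unfolding x_def by simp
    define y where "y = sc r x"
    have yr: "y < r" using sc_lt[OF xr] y_def by simp
    have xF: "x \<notin> F" and yF: "y \<notin> F" using Suc.IH x_def y_def by auto
    have nb: "nbhd (wheel_V r) (wheel_adj r) y = {sc r y, x, r}"
      using nbhd_cyc[OF r yr] pc_sc[OF xr] y_def by simp
    have yV: "y \<in> wheel_V r - F" using yr yF by (auto simp: wheel_V_def)
    have "sc r y \<notin> F"
    proof
      assume "sc r y \<in> F"
      hence "nbhd (wheel_V r) (wheel_adj r) y \<inter> F = {sc r y}" using nb xF rF by auto
      moreover have "card (nbhd (wheel_V r) (wheel_adj r) y \<inter> F) \<noteq> 1"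
        using F yV unfolding fort_def by blast
      ultimately show False by simp
    qed
    thus ?case using yF by (simp add: y_def x_def)
  qed
  have "F = {}"
  proof -
    have "j \<notin> F" if j: "j < r" for j
    proof -
      have e: "a + (r - a + j) = j + r" using a by simp
      have "(sc r ^^ (r - a + j)) a = j" using sc_iter[OF a, of "r - a + j"] j by (simp add: e)
      thus ?thesis using it[of "r - a + j"] by simp
    qed
    moreover have "F \<subseteq> wheel_V r" using F by (simp add: fort_def)
    ultimately show ?thesis using rF lt_of_V[of _ r] by blast
  qed
  thus False using F by (simp add: fort_def)
qed

section \<open>Zero forcing on the wheel\<close>

lemma zf_hub_pair:
  assumes r: "5 \<le> r" and a: "a < r"
  shows "zero_forcing_set (wheel_V r) (wheel_adj r) {r, a, sc r a}"
proof (rule zf_if_hits[OF wfin])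
  show "{r, a, sc r a} \<subseteq> wheel_V r" using a sc_lt[OF a] by (auto simp: wheel_V_def)
  fix F assume F: "fort (wheel_V r) (wheel_adj r) F"
  show "{r, a, sc r a} \<inter> F \<noteq> {}"
  proof
    assume e: "{r, a, sc r a} \<inter> F = {}"
    show False using run[of r F a] r F a e by auto
  qed
qed

lemma zf_triple:
  assumes r: "5 \<le> r" and v: "v < r"
  shows "zero_forcing_set (wheel_V r) (wheel_adj r) {pc r v, v, sc r v}"
proof (rule zf_if_hits[OF wfin])
  show "{pc r v, v, sc r v} \<subseteq> wheel_V r" using v sc_lt[OF v] pc_lt[OF v] by (auto simp: wheel_V_def)
  fix F assume F: "fort (wheel_V r) (wheel_adj r) F"
  have r3: "3 \<le> r" using r by simp
  show "{pc r v, v, sc r v} \<inter> F \<noteq> {}"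
  proof
    assume e: "{pc r v, v, sc r v} \<inter> F = {}"
    show False
    proof (cases "r \<in> F")
      case False
      show False using run[OF r3 F False pc_lt[OF v]] sc_pc[OF v] e by auto
    next
      case True
      have "v \<in> wheel_V r - F" using v e by (auto simp: wheel_V_def)
      hence "card (nbhd (wheel_V r) (wheel_adj r) v \<inter> F) \<noteq> 1" using F unfolding fort_def by blast
      moreover have "nbhd (wheel_V r) (wheel_adj r) v \<inter> F = {r}" using nbhd_cyc[OF r3 v] e True by auto
      ultimately show False by simp
    qed
  qed
qed

lemma small1: "finite (B::nat set) \<Longrightarrow> card B \<le> 1 \<Longrightarrow> B \<subseteq> {0..<r} \<Longrightarrow> 0 < r \<Longrightarrow> \<exists>a<r. B \<subseteq> {a}"
proof -
  assume fin: "finite B" and c: "card B \<le> 1" and B: "B \<subseteq> {0..<r}" and r: "0 < r"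
  show ?thesis
  proof (cases "B = {}")
    case True thus ?thesis using r by auto
  next
    case False
    hence "card B = 1" using c fin by (simp add: card_gt_0_iff le_Suc_eq) 
    then obtain x where "B = {x}" by (auto simp: card_1_singleton_iff)
    thus ?thesis using B by auto
  qed
qed

lemma small2: "finite (B::nat set) \<Longrightarrow> card B \<le> 2 \<Longrightarrow> B \<subseteq> {0..<r} \<Longrightarrow> 2 \<le> r \<Longrightarrow>
   \<exists>a b. a < r \<and> b < r \<and> a \<noteq> b \<and> B \<subseteq> {a, b}"
proof -
  assume fin: "finite B" and c: "card B \<le> 2" and B: "B \<subseteq> {0..<r}" and r: "2 \<le> r"
  have "card B = 0 \<or> card B = 1 \<or> card B = 2" using c by auto
  then show ?thesis
  proof (elim disjE)
    assume "card B = 0" hence "B = {}" using fin by simp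
    thus ?thesis using r by (intro exI[of _ 0] exI[of _ 1]) auto
  next
    assume "card B = 1"
    then obtain x where x: "B = {x}" by (auto simp: card_1_singleton_iff)
    hence xr: "x < r" using B by auto
    show ?thesis using x xr sc_lt[OF xr] sc_ne[OF xr r] by (intro exI[of _ x] exI[of _ "sc r x"]) auto
  next
    assume "card B = 2"
    then obtain x y where "x \<noteq> y" "B = {x, y}" by (auto simp: card_2_iff)
    thus ?thesis using B by auto
  qed
qed

lemma zf_card_ge3:
  assumes r: "5 \<le> r" and zf: "zero_forcing_set (wheel_V r) (wheel_adj r) B"
  shows "3 \<le> card B"
proof (rule ccontr)
  assume "\<not> 3 \<le> card B" hence c: "card B \<le> 2" by simp
  have BV: "B \<subseteq> wheel_V r" using zf by (simp add: zero_forcing_set_def)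
  hence fin: "finite B" using finite_subset wfin by blast
  show False
  proof (cases "r \<in> B")
    case True
    have "card (B - {r}) \<le> 1" using c True fin by simp
    moreover have "B - {r} \<subseteq> {0..<r}" using BV by (rule sub_cyc)
    ultimately obtain a where a: "a < r" "B - {r} \<subseteq> {a}" using small1[of "B - {r}" r] fin r by auto
    have "B \<inter> ({0..<r} - {a}) = {}" using a by auto
    thus False using fort_hit[OF zf fort_minus1[OF r a(1)]] by simp
  next
    case False
    hence "B \<subseteq> {0..<r}" using BV sub_cyc' by blast
    then obtain a b where ab: "a < r" "b < r" "B \<subseteq> {a, b}" using small2[of B r] fin c r by auto
    have "B \<inter> insert r ({0..<r} - {a, b}) = {}" using ab False by auto
    thus False using fort_hit[OF zf fort_hub2[OF r ab(1) ab(2)]] by simp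
  qed
qed

lemma zf_small:
  assumes r: "5 \<le> r" and zf: "zero_forcing_set (wheel_V r) (wheel_adj r) B"
  shows "\<exists>B'. B' \<subseteq> B \<and> zero_forcing_set (wheel_V r) (wheel_adj r) B' \<and> card B' \<le> 3"
proof -
  have BV: "B \<subseteq> wheel_V r" using zf by (simp add: zero_forcing_set_def)
  have r3: "3 \<le> r" using r by simp
  show ?thesis
  proof (cases "r \<in> B")
    case True
    have "\<exists>a<r. a \<in> B \<and> sc r a \<in> B"
    proof (rule ccontr)
      assume na: "\<not> (\<exists>a<r. a \<in> B \<and> sc r a \<in> B)"
      define I where "I = B \<inter> {0..<r}"
      define F where "F = {0..<r} - B"
      have scF: "sc r u \<in> F" if "u \<in> I" for u
      proof -
        have u: "u < r" "u \<in> B" using that unfolding I_def by auto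
        have "sc r u \<notin> B" using na u by blast
        thus ?thesis using sc_lt[OF u(1)] unfolding F_def by simp
      qed
      have pcF: "pc r u \<in> F" if "u \<in> I" for u
      proof -
        have u: "u < r" "u \<in> B" using that I_def by auto
        have "pc r u \<notin> B"
        proof
          assume "pc r u \<in> B"
          moreover have "sc r (pc r u) \<in> B" using sc_pc[OF u(1)] u(2) by simp
          ultimately show False using na pc_lt[OF u(1)] by blast
        qed
        thus ?thesis using pc_lt[OF u(1)] F_def by auto
      qed
      have inj: "inj_on (sc r) I"
      proof (rule inj_onI)
        fix x y assume "x \<in> I" "y \<in> I" "sc r x = sc r y"
        moreover have "x < r" "y < r" using \<open>x \<in> I\<close> \<open>y \<in> I\<close> unfolding I_def by auto
        ultimately show "x = y" using pc_sc[of x r] pc_sc[of y r] by metis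
      qed
      have "card I \<le> card F"
      proof (rule card_inj_on_le[OF inj])
        show "sc r ` I \<subseteq> F" using scF by blast
        show "finite F" by (simp add: F_def)
      qed
      moreover have "card I + card F = r"
      proof -
        have u: "I \<union> F = {0..<r}" and d: "I \<inter> F = {}" unfolding I_def F_def by auto
        have "card (I \<union> F) = card I + card F"
          by (rule card_Un_disjoint) (use d in \<open>auto simp: I_def F_def\<close>)
        thus ?thesis using u by simp
      qed
      ultimately have "2 \<le> card F" using r by linarith
      then obtain x y where xy: "x \<in> F" "y \<in> F" "x \<noteq> y" using two_elems by blast
      have finF: "finite F" unfolding F_def by simp
      have "fort (wheel_V r) (wheel_adj r) F"
        unfolding fort_def
      proof (intro conjI ballI)
        show "F \<noteq> {}" using xy by blast
        show "F \<subseteq> wheel_V r" by (auto simp: F_def wheel_V_def)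
        fix v assume v: "v \<in> wheel_V r - F"
        hence "v = r \<or> v \<in> I" by (auto simp: wheel_V_def F_def I_def)
        then show "card (nbhd (wheel_V r) (wheel_adj r) v \<inter> F) \<noteq> 1"
        proof
          assume "v = r"
          hence "nbhd (wheel_V r) (wheel_adj r) v \<inter> F = F" using nbhd_hub[of r] by (auto simp: F_def)
          thus ?thesis using card_ne1[OF finF xy] by simp
        next
          assume vI: "v \<in> I"
          hence vr: "v < r" by (simp add: I_def)
          have "sc r v \<in> nbhd (wheel_V r) (wheel_adj r) v \<inter> F" "pc r v \<in> nbhd (wheel_V r) (wheel_adj r) v \<inter> F"
            using nbhd_cyc[OF r3 vr] scF[OF vI] pcF[OF vI] by auto
          thus ?thesis by (rule card_ne1_nb) (use sc_pc_ne[OF vr r3] in simp)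
        qed
      qed
      moreover have "B \<inter> F = {}" by (auto simp: F_def)
      ultimately show False using fort_hit[OF zf] by blast
    qed
    then obtain a where a: "a < r" "a \<in> B" "sc r a \<in> B" by blast
    have "{r, a, sc r a} \<subseteq> B" using True a by blast
    thus ?thesis using zf_hub_pair[OF r a(1)] card3[of r a "sc r a"] by blast
  next
    case False
    have "\<exists>v<r. v \<in> B \<and> sc r v \<in> B \<and> pc r v \<in> B"
    proof (rule ccontr)
      assume nv: "\<not> (\<exists>v<r. v \<in> B \<and> sc r v \<in> B \<and> pc r v \<in> B)"
      define F where "F = insert r ({0..<r} - B)"
      have "fort (wheel_V r) (wheel_adj r) F"
        unfolding fort_def
      proof (intro conjI ballI)
        show "F \<noteq> {}" by (simp add: F_def)
        show "F \<subseteq> wheel_V r" by (auto simp: F_def wheel_V_def)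
        fix v assume v: "v \<in> wheel_V r - F"
        hence vB: "v \<in> B" and vr: "v < r" by (auto simp: wheel_V_def F_def)
        have "\<exists>c. c \<in> {sc r v, pc r v} \<and> c \<notin> B" using nv vB vr by blast
        then obtain c where c: "c \<in> {sc r v, pc r v}" "c \<notin> B" by blast
        have cr: "c < r" using c sc_lt[OF vr] pc_lt[OF vr] by auto
        have "c \<in> nbhd (wheel_V r) (wheel_adj r) v \<inter> F" "r \<in> nbhd (wheel_V r) (wheel_adj r) v \<inter> F"
          using c cr nbhd_cyc[OF r3 vr] by (auto simp: F_def)
        thus "card (nbhd (wheel_V r) (wheel_adj r) v \<inter> F) \<noteq> 1"
          by (rule card_ne1_nb) (use cr in simp)
      qed
      moreover have "B \<inter> F = {}" using False by (auto simp: F_def)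
      ultimately show False using fort_hit[OF zf] by blast
    qed
    then obtain v where v: "v < r" "v \<in> B" "sc r v \<in> B" "pc r v \<in> B" by blast
    have "{pc r v, v, sc r v} \<subseteq> B" using v by blast
    thus ?thesis using zf_triple[OF r v(1)] card3[of "pc r v" v "sc r v"] by blast
  qed
qed

lemma zf_sets_finite: "finite {B. zero_forcing_set (wheel_V r) (wheel_adj r) B}"
  by (rule finite_subset[of _ "Pow (wheel_V r)"]) (auto simp: zero_forcing_set_def wfin)

lemma B0_card: "5 \<le> r \<Longrightarrow> card {r, 0, sc r 0} = 3"
  using sc_lt[of 0 r] sc_ne[of 0 r] by auto

lemma Z_eq: assumes r: "5 \<le> r" shows "Z (wheel_V r) (wheel_adj r) = 3"
  unfolding Z_def
proof (rule Min_eqI)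
  show "finite (card ` {B. zero_forcing_set (wheel_V r) (wheel_adj r) B})"
    using zf_sets_finite by simp
  show "\<And>y. y \<in> card ` {B. zero_forcing_set (wheel_V r) (wheel_adj r) B} \<Longrightarrow> 3 \<le> y"
    using zf_card_ge3[OF r] by auto
  show "3 \<in> card ` {B. zero_forcing_set (wheel_V r) (wheel_adj r) B}"
    using zf_hub_pair[OF r, of 0] B0_card[OF r] r by (intro image_eqI[of _ _ "{r, 0, sc r 0}"]) auto
qed

lemma Zbar_eq: assumes r: "5 \<le> r" shows "Zbar (wheel_V r) (wheel_adj r) = 3"
  unfolding Zbar_def
proof (rule Max_eqI)
  show "finite (card ` {B. minimal_zero_forcing_set (wheel_V r) (wheel_adj r) B})"
    by (rule finite_imageI, rule finite_subset[OF _ zf_sets_finite]) (auto simp: minimal_zero_forcing_set_def)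
  fix y assume "y \<in> card ` {B. minimal_zero_forcing_set (wheel_V r) (wheel_adj r) B}"
  then obtain B where B: "minimal_zero_forcing_set (wheel_V r) (wheel_adj r) B" "y = card B" by blast
  obtain B' where B': "B' \<subseteq> B" "zero_forcing_set (wheel_V r) (wheel_adj r) B'" "card B' \<le> 3"
    using zf_small[OF r] B(1) by (auto simp: minimal_zero_forcing_set_def)
  have "B' = B" using B(1) B'(1,2) unfolding minimal_zero_forcing_set_def by blast
  thus "y \<le> 3" using B B' by simp
next
  have zf: "zero_forcing_set (wheel_V r) (wheel_adj r) {r, 0, sc r 0}" using zf_hub_pair[OF r, of 0] r by simp
  have "minimal_zero_forcing_set (wheel_V r) (wheel_adj r) {r, 0, sc r 0}"
    unfolding minimal_zero_forcing_set_def
  proof (intro conjI allI impI zf)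
    fix B' assume "B' \<subset> {r, 0, sc r 0}"
    hence "card B' < 3" using psubset_card_mono[of "{r, 0, sc r 0}" B'] B0_card[OF r] by simp
    thus "\<not> zero_forcing_set (wheel_V r) (wheel_adj r) B'" using zf_card_ge3[OF r] by fastforce
  qed
  thus "3 \<in> card ` {B. minimal_zero_forcing_set (wheel_V r) (wheel_adj r) B}"
    using B0_card[OF r] by (intro image_eqI[of _ _ "{r, 0, sc r 0}"]) auto
qed

lemma q_bounds: "(r::nat) \<le> 3 * ((r + 2) div 3)" "3 * ((r + 2) div 3) \<le> r + 2"
proof -
  have e: "r + 2 = 3 * ((r + 2) div 3) + (r + 2) mod 3" by simp
  have m: "(r + 2) mod 3 < 3" by simp
  show "r \<le> 3 * ((r + 2) div 3)" using e m by linarith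
  show "3 * ((r + 2) div 3) \<le> r + 2" using e m by linarith
qed

lemma arith3: "5 \<le> (r::nat) \<Longrightarrow> 3 \<le> r - (r + 2) div 3"
proof -
  assume r: "5 \<le> r"
  show ?thesis
  proof (cases "r = 5")
    case True thus ?thesis by simp
  next
    case False thus ?thesis using r q_bounds[of r] by linarith
  qed
qed

lemma arith1: "5 \<le> (r::nat) \<Longrightarrow> 2 * t \<le> r \<Longrightarrow> t + 1 \<le> r - (r + 2) div 3"
proof -
  assume r: "5 \<le> r" and t: "2 * t \<le> r"
  show ?thesis
  proof (cases "10 \<le> r")
    case True thus ?thesis using t q_bounds[of r] by linarith
  next
    case False
    hence "r = 5 \<or> r = 6 \<or> r = 7 \<or> r = 8 \<or> r = 9" using r by linarith
    thus ?thesis using t by (elim disjE) simp_all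
  qed
qed

lemma arith4: "(r::nat) \<le> 3 * d \<Longrightarrow> (r + 2) div 3 \<le> d"
  using q_bounds[of r] by linarith

section \<open>Domination in the cycle\<close>

lemma dom_iff: "3 \<le> r \<Longrightarrow> dominating_set (cycle_V r) (cycle_adj r) D \<longleftrightarrow>
   D \<subseteq> {0..<r} \<and> (\<forall>v<r. v \<in> D \<or> sc r v \<in> D \<or> pc r v \<in> D)"
  by (auto simp: dominating_set_def cycle_V_def cycle_adj_iff)

lemma dom_lower:
  assumes r: "3 \<le> r" and D: "dominating_set (cycle_V r) (cycle_adj r) D"
  shows "r \<le> 3 * card D"
proof -
  have DC: "D \<subseteq> {0..<r}" and cov: "\<forall>v<r. v \<in> D \<or> sc r v \<in> D \<or> pc r v \<in> D"
    using D dom_iff[OF r] by auto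
  have finD: "finite D" using DC finite_subset by blast
  have "{0..<r} \<subseteq> (\<Union>d\<in>D. {d, sc r d, pc r d})"
  proof
    fix v assume "v \<in> {0..<r}"
    hence v: "v < r" by simp
    show "v \<in> (\<Union>d\<in>D. {d, sc r d, pc r d})"
      using cov v pc_sc[OF v] sc_pc[OF v] by (metis UN_iff insertCI)
  qed
  hence "r \<le> card (\<Union>d\<in>D. {d, sc r d, pc r d})"
    using card_mono[of "\<Union>d\<in>D. {d, sc r d, pc r d}" "{0..<r}"] finD by simp
  also have "\<dots> \<le> (\<Sum>d\<in>D. card {d, sc r d, pc r d})" by (rule card_UN_le[OF finD])
  also have "\<dots> \<le> (\<Sum>d\<in>D. 3)" by (rule sum_mono) (rule card3)
  also have "\<dots> = 3 * card D" by simp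
  finally show ?thesis .
qed

definition D0 :: "nat \<Rightarrow> nat set" where "D0 r = {i. i < r \<and> i mod 3 = 0}"

lemma D0_dom: assumes r: "3 \<le> r" shows "dominating_set (cycle_V r) (cycle_adj r) (D0 r)"
  unfolding dom_iff[OF r]
proof (intro conjI allI impI)
  show "D0 r \<subseteq> {0..<r}" by (auto simp: D0_def)
  fix v assume v: "v < r"
  have "v mod 3 = 0 \<or> v mod 3 = 1 \<or> v mod 3 = 2" by presburger
  then show "v \<in> D0 r \<or> sc r v \<in> D0 r \<or> pc r v \<in> D0 r"
  proof (elim disjE)
    assume "v mod 3 = 0" thus ?thesis using v by (simp add: D0_def)
  next
    assume h: "v mod 3 = 1"
    hence "v \<noteq> 0" "(v - 1) mod 3 = 0" by presburger+
    thus ?thesis using v by (simp add: D0_def pc_def less_imp_diff_less)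
  next
    assume h: "v mod 3 = 2"
    show ?thesis
    proof (cases "Suc v = r")
      case True thus ?thesis using v by (simp add: D0_def sc_def)
    next
      case False
      have "(Suc v) mod 3 = 0" using h by presburger
      thus ?thesis using v False by (simp add: D0_def sc_def)
    qed
  qed
qed

lemma D0_card: "card (D0 r) = (r + 2) div 3"
proof -
  have "D0 r = (\<lambda>k. 3 * k) ` {..<(r + 2) div 3}"
  proof (intro set_eqI iffI)
    fix x assume "x \<in> D0 r"
    hence x: "x < r" "x mod 3 = 0" by (auto simp: D0_def)
    have x3: "x = 3 * (x div 3)" using x(2) by (metis div_mult_mod_eq add_0_right mult.commute)
    moreover have "x div 3 < (r + 2) div 3" using x(1) x3 q_bounds[of r] by linarith
    ultimately show "x \<in> (\<lambda>k. 3 * k) ` {..<(r + 2) div 3}" by (intro image_eqI[of _ _ "x div 3"]) auto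
  next
    fix x assume "x \<in> (\<lambda>k. 3 * k) ` {..<(r + 2) div 3}"
    then obtain k where k: "k < (r + 2) div 3" "x = 3 * k" by auto
    have "3 * k < r" using k(1) q_bounds[of r] by linarith
    thus "x \<in> D0 r" using k by (simp add: D0_def)
  qed
  moreover have "inj_on (\<lambda>k::nat. 3 * k) {..<(r + 2) div 3}" by (auto simp: inj_on_def)
  ultimately show ?thesis by (simp add: card_image)
qed

lemma gamma_eq: assumes r: "3 \<le> r"
  shows "domination_number (cycle_V r) (cycle_adj r) = (r + 2) div 3"
  unfolding domination_number_def
proof (rule Min_eqI)
  show "finite (card ` {D. dominating_set (cycle_V r) (cycle_adj r) D})"
    by (rule finite_imageI, rule finite_subset[of _ "Pow {0..<r}"]) (auto simp: dom_iff[OF r])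
  fix y assume "y \<in> card ` {D. dominating_set (cycle_V r) (cycle_adj r) D}"
  then obtain D where "dominating_set (cycle_V r) (cycle_adj r) D" "y = card D" by blast
  thus "(r + 2) div 3 \<le> y" using dom_lower[OF r] arith4 by blast
next
  show "(r + 2) div 3 \<in> card ` {D. dominating_set (cycle_V r) (cycle_adj r) D}"
    using D0_dom[OF r] D0_card[of r] by (intro image_eqI[of _ _ "D0 r"]) auto
qed

lemma ceil_eq: "nat \<lceil>real r / 3\<rceil> = (r + 2) div 3"
proof -
  define q where "q = (r + 2) div 3"
  have h1: "r \<le> 3 * q" unfolding q_def by (rule q_bounds)
  have h2: "3 * q < r + 3" unfolding q_def using q_bounds(2)[of r] by linarith
  have "real r \<le> real (3 * q)" using h1 by (simp only: of_nat_le_iff)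
  hence h1': "real r \<le> 3 * real q" by simp
  have "real (3 * q) < real (r + 3)" using h2 by (simp only: of_nat_less_iff)
  hence h2': "3 * real q < real r + 3" by simp
  have "\<lceil>real r / 3\<rceil> = int q"
  proof (rule ceiling_unique)
    show "real_of_int (int q) - 1 < real r / 3" using h2' by simp
    show "real r / 3 \<le> real_of_int (int q)" using h1' by simp
  qed
  thus ?thesis unfolding q_def by simp
qed

section \<open>ZIr sets\<close>

lemma notin_priv:
  assumes "S \<inter> F = {x}" "v \<in> S" "v \<noteq> x" shows "v \<notin> F"
proof
  assume "v \<in> F"
  hence "v \<in> S \<inter> F" using assms(2) by simp
  hence "v \<in> {x}" using assms(1) by simp
  thus False using assms(3) by simp
qed

lemma zir3:
  assumes r: "5 \<le> r" and a: "a < r" and b: "b < r" and ab: "a \<noteq> b"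
  shows "ZIr_set (wheel_V r) (wheel_adj r) {r, a, b}"
  unfolding ZIr_set_def private_fort_def
proof (intro conjI ballI)
  show "{r, a, b} \<subseteq> wheel_V r" using a b by (auto simp: wheel_V_def)
  fix x assume x: "x \<in> {r, a, b}"
  then consider "x = r" | "x = a" | "x = b" by blast
  then show "\<exists>F. fort (wheel_V r) (wheel_adj r) F \<and> {r, a, b} \<inter> F = {x}"
  proof cases
    case 1 thus ?thesis using fort_hub2[OF r a b] a b by (intro exI[of _ "insert r ({0..<r} - {a, b})"]) auto
  next
    case 2 thus ?thesis using fort_minus1[OF r b] a b ab by (intro exI[of _ "{0..<r} - {b}"]) auto
  next
    case 3 thus ?thesis using fort_minus1[OF r a] a b ab by (intro exI[of _ "{0..<r} - {a}"]) auto
  qed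
qed

lemma hubfree_indep:
  assumes r: "3 \<le> r" and F: "fort (wheel_V r) (wheel_adj r) F" and rF: "r \<notin> F"
    and SF: "S \<inter> F = {x}" and u: "u < r" "u \<in> S" "sc r u \<in> S" "u \<noteq> x" "sc r u \<noteq> x"
  shows False
  using run[OF r F rF u(1)] SF u by blast

lemma indep_card:
  assumes r: "3 \<le> r" and A: "A \<subseteq> {0..<r}" and ind: "\<forall>u\<in>A. sc r u \<notin> A"
  shows "2 * card A \<le> r"
proof -
  have inj: "inj_on (sc r) A"
  proof (rule inj_onI)
    fix x y assume "x \<in> A" "y \<in> A" "sc r x = sc r y"
    moreover have "x < r" "y < r" using \<open>x \<in> A\<close> \<open>y \<in> A\<close> A by auto
    ultimately show "x = y" using pc_sc[of x r] pc_sc[of y r] by metis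
  qed
  have "sc r ` A \<subseteq> {0..<r} - A" using ind A sc_lt by auto
  hence "card A \<le> card ({0..<r} - A)" using card_inj_on_le[OF inj] by auto
  also have "\<dots> = r - card A" using A by (simp add: card_Diff_subset finite_subset)
  finally show ?thesis using A card_mono[of "{0..<r}" A] by simp
qed

lemma zir_upper:
  assumes r: "5 \<le> r" and S: "ZIr_set (wheel_V r) (wheel_adj r) S"
  shows "card S \<le> r - (r + 2) div 3"
proof -
  have r3: "3 \<le> r" using r by simp
  have SV: "S \<subseteq> wheel_V r" using S by (simp add: ZIr_set_def)
  have finS: "finite S" using SV wfin finite_subset by blast
  have priv: "\<forall>x\<in>S. \<exists>F. fort (wheel_V r) (wheel_adj r) F \<and> S \<inter> F = {x}"
    using S by (simp add: ZIr_set_def private_fort_def)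
  show ?thesis
  proof (cases "r \<in> S")
    case True
    define T where "T = S - {r}"
    have c0: "card S > 0" using True finS card_gt_0_iff by blast
    have "card T = card S - 1" unfolding T_def using True by (rule card_Diff_singleton)
    hence cS: "card S = card T + 1" using c0 by simp
    have TC: "T \<subseteq> {0..<r}" using SV sub_cyc unfolding T_def by blast
    show ?thesis
    proof (cases "card T \<le> 2")
      case True thus ?thesis using cS arith3[OF r] by linarith
    next
      case False
      have ind: "\<forall>u\<in>T. sc r u \<notin> T"
      proof (intro ballI notI)
        fix u assume u: "u \<in> T" "sc r u \<in> T"
        have "T - {u, sc r u} \<noteq> {}"
        proof
          assume "T - {u, sc r u} = {}"
          hence "card T \<le> card {u, sc r u}" using card_mono[of "{u, sc r u}" T] by auto
          also have "\<dots> \<le> 2" by (simp add: card_insert_if)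
          finally show False using False by simp
        qed
        then obtain x where x: "x \<in> T" "x \<noteq> u" "x \<noteq> sc r u" by blast
        obtain F where F: "fort (wheel_V r) (wheel_adj r) F" "S \<inter> F = {x}" using priv x(1) by (auto simp: T_def)
        have xr: "r \<noteq> x" using x(1) by (auto simp: T_def)
        have rF: "r \<notin> F" by (rule notin_priv[OF F(2) True xr])
        have ur: "u < r" using u(1) TC by (auto simp: subset_iff)
        have uS: "u \<in> S" "sc r u \<in> S" using u by (auto simp: T_def)
        show False by (rule hubfree_indep[OF r3 F(1) rF F(2) ur uS(1) uS(2)]) (use x in auto)
      qed
      have "2 * card T \<le> r" by (rule indep_card[OF r3 TC ind])
      thus ?thesis using cS arith1[OF r, of "card T"] by linarith
    qed
  next
    case False
    have SC: "S \<subseteq> {0..<r}" using SV False sub_cyc' by blast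
    show ?thesis
    proof (cases "card S \<le> 3")
      case True thus ?thesis using arith3[OF r] by linarith
    next
      case big: False
      show ?thesis
      proof (cases "\<exists>x\<in>S. \<exists>F. fort (wheel_V r) (wheel_adj r) F \<and> r \<notin> F \<and> S \<inter> F = {x}")
        case True
        then obtain x F where xF: "x \<in> S" "fort (wheel_V r) (wheel_adj r) F" "r \<notin> F" "S \<inter> F = {x}" by blast
        have ind: "\<forall>u\<in>S - {x}. sc r u \<notin> S - {x}"
        proof (intro ballI notI)
          fix u assume u: "u \<in> S - {x}" "sc r u \<in> S - {x}"
          have ur: "u < r" using SC u(1) by (auto simp: subset_iff)
          show False by (rule hubfree_indep[OF r3 xF(2) xF(3) xF(4) ur]) (use u in auto)
        qed
        have "2 * card (S - {x}) \<le> r" by (rule indep_card[OF r3 _ ind]) (use SC in auto)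
        moreover have "card (S - {x}) = card S - 1" using xF(1) finS by simp
        ultimately show ?thesis using big arith1[OF r, of "card (S - {x})"] by linarith
      next
        case hub: False
        define D where "D = {0..<r} - S"
        have "dominating_set (cycle_V r) (cycle_adj r) D"
          unfolding dom_iff[OF r3]
        proof (intro conjI allI impI)
          show "D \<subseteq> {0..<r}" by (auto simp: D_def)
          fix v assume vr: "v < r"
          show "v \<in> D \<or> sc r v \<in> D \<or> pc r v \<in> D"
          proof (cases "v \<in> S")
            case False thus ?thesis using vr by (simp add: D_def)
          next
            case vS: True
            have "S - {v, sc r v, pc r v} \<noteq> {}"
            proof
              assume "S - {v, sc r v, pc r v} = {}"
              hence "card S \<le> card {v, sc r v, pc r v}" using card_mono[of "{v, sc r v, pc r v}" S] by auto
              also have "\<dots> \<le> 3" by (rule card3)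
              finally show False using big by simp
            qed
            then obtain x where x: "x \<in> S" "x \<noteq> v" "x \<noteq> sc r v" "x \<noteq> pc r v" by blast
            obtain F where F: "fort (wheel_V r) (wheel_adj r) F" "S \<inter> F = {x}" using priv x(1) by blast
            have rF: "r \<in> F"
            proof (rule ccontr)
              assume "r \<notin> F"
              hence "\<exists>x\<in>S. \<exists>F. fort (wheel_V r) (wheel_adj r) F \<and> r \<notin> F \<and> S \<inter> F = {x}"
                using x(1) F by blast
              thus False using hub by blast
            qed
            have "v \<notin> F"
            proof
              assume "v \<in> F"
              hence "v \<in> S \<inter> F" using vS by simp
              hence "v = x" using F(2) by simp
              thus False using x(2) by simp
            qed
            hence "v \<in> wheel_V r - F" using vr by (auto simp: wheel_V_def)
            hence c1: "card (nbhd (wheel_V r) (wheel_adj r) v \<inter> F) \<noteq> 1" using F(1) unfolding fort_def by blast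
            have "nbhd (wheel_V r) (wheel_adj r) v \<inter> F \<noteq> {r}"
            proof
              assume "nbhd (wheel_V r) (wheel_adj r) v \<inter> F = {r}"
              hence "card (nbhd (wheel_V r) (wheel_adj r) v \<inter> F) = 1" by simp
              thus False using c1 by simp
            qed
            moreover have "r \<in> nbhd (wheel_V r) (wheel_adj r) v \<inter> F" using rF nbhd_cyc[OF r3 vr] by auto
            ultimately obtain c where c: "c \<in> nbhd (wheel_V r) (wheel_adj r) v \<inter> F" "c \<noteq> r" by blast
            hence cc: "c = sc r v \<or> c = pc r v" using nbhd_cyc[OF r3 vr] by auto
            have cF: "c \<in> F" using c(1) by simp
            have cx: "c \<noteq> x" using cc x(3) x(4) by auto
            have "c \<notin> S"
            proof
              assume "c \<in> S"
              hence "c \<in> S \<inter> F" using cF by simp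
              hence "c = x" using F(2) by simp
              thus False using cx by simp
            qed
            moreover have "c < r" using cc sc_lt[OF vr] pc_lt[OF vr] by auto
            ultimately have "c \<in> D" by (simp add: D_def)
            thus ?thesis using cc by auto
          qed
        qed
        hence "r \<le> 3 * card D" by (rule dom_lower[OF r3])
        moreover have "card D = r - card S" using SC by (simp add: D_def card_Diff_subset finite_subset)
        moreover have "card S \<le> r" using SC card_mono[of "{0..<r}" S] by simp
        ultimately show ?thesis using arith4[of r "card D"] by linarith
      qed
    qed
  qed
qed

definition S0 :: "nat \<Rightarrow> nat set" where "S0 r = {0..<r} - D0 r"

lemma S0_zir: assumes r: "5 \<le> r" shows "ZIr_set (wheel_V r) (wheel_adj r) (S0 r)"
  unfolding ZIr_set_def private_fort_def
proof (intro conjI ballI)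
  have r3: "3 \<le> r" using r by simp
  show "S0 r \<subseteq> wheel_V r" by (auto simp: S0_def wheel_V_def)
  fix x assume x: "x \<in> S0 r"
  define F where "F = insert r (insert x (D0 r))"
  have dom: "\<forall>v<r. v \<in> D0 r \<or> sc r v \<in> D0 r \<or> pc r v \<in> D0 r" using D0_dom[OF r3] dom_iff[OF r3] by blast
  have "fort (wheel_V r) (wheel_adj r) F"
    unfolding fort_def
  proof (intro conjI ballI)
    show "F \<noteq> {}" by (simp add: F_def)
    show "F \<subseteq> wheel_V r" using x by (auto simp: F_def wheel_V_def S0_def D0_def)
    fix v assume v: "v \<in> wheel_V r - F"
    hence vr: "v < r" and vD: "v \<notin> D0 r" by (auto simp: wheel_V_def F_def)
    obtain c where c: "c = sc r v \<or> c = pc r v" "c \<in> D0 r" using dom vr vD by blast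
    have cr: "c < r" using c sc_lt[OF vr] pc_lt[OF vr] by auto
    have "c \<in> nbhd (wheel_V r) (wheel_adj r) v \<inter> F" "r \<in> nbhd (wheel_V r) (wheel_adj r) v \<inter> F"
      using c cr nbhd_cyc[OF r3 vr] by (auto simp: F_def)
    thus "card (nbhd (wheel_V r) (wheel_adj r) v \<inter> F) \<noteq> 1"
      by (rule card_ne1_nb) (use cr in simp)
  qed
  moreover have "S0 r \<inter> F = {x}" using x by (auto simp: S0_def F_def)
  ultimately show "\<exists>F. fort (wheel_V r) (wheel_adj r) F \<and> S0 r \<inter> F = {x}" by blast
qed

lemma S0_card: "card (S0 r) = r - (r + 2) div 3"
proof -
  have "D0 r \<subseteq> {0..<r}" by (auto simp: D0_def)
  thus ?thesis using D0_card[of r] by (simp add: S0_def card_Diff_subset finite_subset)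
qed

lemma zir_sets_finite: "finite {S. maximal_ZIr_set (wheel_V r) (wheel_adj r) S}"
  by (rule finite_subset[of _ "Pow (wheel_V r)"]) (auto simp: maximal_ZIr_set_def ZIr_set_def wfin)

lemma ZIR_eq: assumes r: "5 \<le> r" shows "ZIR (wheel_V r) (wheel_adj r) = r - (r + 2) div 3"
  unfolding ZIR_def
proof (rule Max_eqI)
  show "finite (card ` {S. maximal_ZIr_set (wheel_V r) (wheel_adj r) S})" using zir_sets_finite by simp
  fix y assume "y \<in> card ` {S. maximal_ZIr_set (wheel_V r) (wheel_adj r) S}"
  then obtain S where "maximal_ZIr_set (wheel_V r) (wheel_adj r) S" "y = card S" by blast
  thus "y \<le> r - (r + 2) div 3" using zir_upper[OF r] by (auto simp: maximal_ZIr_set_def)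
next
  have "maximal_ZIr_set (wheel_V r) (wheel_adj r) (S0 r)"
    unfolding maximal_ZIr_set_def
  proof (intro conjI allI impI S0_zir[OF r])
    fix T assume T: "S0 r \<subset> T"
    show "\<not> ZIr_set (wheel_V r) (wheel_adj r) T"
    proof
      assume Tz: "ZIr_set (wheel_V r) (wheel_adj r) T"
      have "finite T" using Tz wfin finite_subset by (auto simp: ZIr_set_def)
      hence "card (S0 r) < card T" using psubset_card_mono T by blast
      thus False using zir_upper[OF r Tz] S0_card[of r] by simp
    qed
  qed
  thus "r - (r + 2) div 3 \<in> card ` {S. maximal_ZIr_set (wheel_V r) (wheel_adj r) S}"
    using S0_card[of r] by (intro image_eqI[of _ _ "S0 r"]) auto
qed

lemma zir_eq: assumes r: "5 \<le> r" shows "zir (wheel_V r) (wheel_adj r) = 3"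
  unfolding zir_def
proof (rule Min_eqI)
  show "finite (card ` {S. maximal_ZIr_set (wheel_V r) (wheel_adj r) S})" using zir_sets_finite by simp
  fix y assume "y \<in> card ` {S. maximal_ZIr_set (wheel_V r) (wheel_adj r) S}"
  then obtain S where S: "maximal_ZIr_set (wheel_V r) (wheel_adj r) S" "y = card S" by blast
  show "3 \<le> y"
  proof (rule ccontr)
    assume "\<not> 3 \<le> y" hence c: "card S \<le> 2" using S by simp
    have SZ: "ZIr_set (wheel_V r) (wheel_adj r) S" and mx: "\<forall>T. S \<subset> T \<longrightarrow> \<not> ZIr_set (wheel_V r) (wheel_adj r) T"
      using S(1) unfolding maximal_ZIr_set_def by blast+
    have SV: "S \<subseteq> wheel_V r" using SZ unfolding ZIr_set_def by blast
    have fin: "finite S" using SV wfin finite_subset by blast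
    have fin': "finite (S - {r})" using fin by simp
    have c2: "card (S - {r}) \<le> 2" using c card_Diff1_le[of S r] by linarith
    have sc: "S - {r} \<subseteq> {0..<r}" using SV by (rule sub_cyc)
    have r2: "2 \<le> r" using r by simp
    obtain a b where ab: "a < r" "b < r" "a \<noteq> b" "S - {r} \<subseteq> {a, b}"
      using small2[OF fin' c2 sc r2] by blast
    have sub: "S \<subseteq> {r, a, b}" using ab(4) by blast
    have "r \<noteq> a" "r \<noteq> b" using ab by auto
    hence c3: "card {r, a, b} = 3" using ab(3) by simp
    have "S \<noteq> {r, a, b}" using c c3 by auto
    hence "S \<subset> {r, a, b}" using sub by blast
    thus False using mx zir3[OF r ab(1) ab(2) ab(3)] by blast
  qed
next
  have r3: "3 \<le> r" using r by simp
  have r0: "0 < r" using r by simp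
  have s0: "sc r 0 < r" "0 \<noteq> sc r 0" using sc_lt[OF r0] sc_ne[OF r0] r by auto
  have "maximal_ZIr_set (wheel_V r) (wheel_adj r) {r, 0, sc r 0}"
    unfolding maximal_ZIr_set_def
  proof (intro conjI allI impI)
    show "ZIr_set (wheel_V r) (wheel_adj r) {r, 0, sc r 0}" by (rule zir3[OF r r0 s0(1) s0(2)])
    fix T assume T: "{r, 0, sc r 0} \<subset> T"
    show "\<not> ZIr_set (wheel_V r) (wheel_adj r) T"
    proof
      assume Tz: "ZIr_set (wheel_V r) (wheel_adj r) T"
      have TV: "T \<subseteq> wheel_V r" and pf: "\<forall>x\<in>T. \<exists>F. private_fort (wheel_V r) (wheel_adj r) T x F"
        using Tz unfolding ZIr_set_def by blast+
      have Ts: "r \<in> T" "0 \<in> T" "sc r 0 \<in> T" using T by blast+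
      obtain y where y: "y \<in> T" "y \<notin> {r, 0, sc r 0}" using T by blast
      obtain F where F: "fort (wheel_V r) (wheel_adj r) F" "T \<inter> F = {y}"
        using pf y(1) unfolding private_fort_def by blast
      have yn: "r \<noteq> y" "0 \<noteq> y" "sc r 0 \<noteq> y" using y(2) by auto
      have n1: "r \<notin> F" by (rule notin_priv[OF F(2) Ts(1) yn(1)])
      have n2: "0 \<notin> F" by (rule notin_priv[OF F(2) Ts(2) yn(2)])
      have n3: "sc r 0 \<notin> F" by (rule notin_priv[OF F(2) Ts(3) yn(3)])
      show False by (rule run[OF r3 F(1) n1 r0 n2 n3])
    qed
  qed
  thus "3 \<in> card ` {S. maximal_ZIr_set (wheel_V r) (wheel_adj r) S}"
    using B0_card[OF r] by (intro image_eqI[of _ _ "{r, 0, sc r 0}"]) auto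
qed

theorem proposition6p4:
  fixes r :: nat
  assumes "r \<ge> 5"
  shows "ZIR (wheel_V r) (wheel_adj r) = r - domination_number (cycle_V r) (cycle_adj r)
       \<and> r - domination_number (cycle_V r) (cycle_adj r) = r - nat \<lceil>real r / 3\<rceil>
       \<and> zir (wheel_V r) (wheel_adj r) = 3
       \<and> Z (wheel_V r) (wheel_adj r) = 3
       \<and> Zbar (wheel_V r) (wheel_adj r) = 3"
proof -
  have r3: "3 \<le> r" using assms by simp
  show ?thesis using ZIR_eq[OF assms] gamma_eq[OF r3] ceil_eq[of r] zir_eq[OF assms] Z_eq[OF assms] Zbar_eq[OF assms]
    by simp
qed

end
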